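(* Let $R$ be an associative (unital) ring and let $\sigma\colon R\to R$ be an additive surjection with $\sigma(1)=1$. If $R$ is right Noetherian, then the non-associative skew power series ring $R[[X;\sigma]]$ is right Noetherian.
   Context: A right ideal of a non-associative ring $S$ is an additive subgroup $I$ with $Is\subseteq I$ for all $s\in S$; $S$ is right Noetherian if it satisfies the ascending chain condition on right ideals. $R[[X;\sigma]]$ is the set of formal power series $\sum_{i=0}^\infty r_iX^i$ with $r_i\in R$, with pointwise addition and multiplication $\left(\sum_m a_mX^m\right)\left(\sum_n b_nX^n\right)=\sum_{k}\left(\sum_{m+n=k}a_m\sigma^m(b_n)\right)X^k$, i.e. the extension of $(rX^m)(sX^n)=(r\sigma^m(s))X^{m+n}$ for $r,s\in R$, $m,n\in\mathbb{N}$; it is a unital, not necessarily associative ring. *)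

theory Defs
  imports "HOL-Computational_Algebra.Formal_Power_Series"
begin

definition right_ideal_wrt :: "('b::ab_group_add \<Rightarrow> 'b \<Rightarrow> 'b) \<Rightarrow> 'b set \<Rightarrow> bool" where
  "right_ideal_wrt mul I \<longleftrightarrow>
     0 \<in> I \<and> (\<forall>x\<in>I. \<forall>y\<in>I. x - y \<in> I) \<and> (\<forall>x\<in>I. \<forall>s. mul x s \<in> I)"

definition right_noetherian_wrt :: "('b::ab_group_add \<Rightarrow> 'b \<Rightarrow> 'b) \<Rightarrow> bool" where
  "right_noetherian_wrt mul \<longleftrightarrow>
     (\<forall>I :: nat \<Rightarrow> 'b set. (\<forall>n. right_ideal_wrt mul (I n)) \<and> (\<forall>n. I n \<subseteq> I (Suc n))
        \<longrightarrow> (\<exists>N. \<forall>n\<ge>N. I n = I N))"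

definition skew_fps_mult :: "('a::ring_1 \<Rightarrow> 'a) \<Rightarrow> 'a fps \<Rightarrow> 'a fps \<Rightarrow> 'a fps" where
  "skew_fps_mult \<sigma> f g = Abs_fps (\<lambda>k. \<Sum>m\<le>k. fps_nth f m * (\<sigma> ^^ m) (fps_nth g (k - m)))"

end

theory Submission
  imports Defs
begin

unbundle fps_syntax

definition mon :: "'a::zero \<Rightarrow> nat \<Rightarrow> 'a fps" where
  "mon c k = Abs_fps (\<lambda>t. if t = k then c else 0)"

lemma mon_nth[simp]: "mon c k $ t = (if t = k then c else 0)"
  by (simp add: mon_def)

definition Lc :: "nat \<Rightarrow> 'a::zero fps set \<Rightarrow> 'a set" where
  "Lc n I = {x. \<exists>f\<in>I. (\<forall>i<n. f $ i = 0) \<and> f $ n = x}"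

definition sp :: "'a::ring_1 set \<Rightarrow> 'a set" where
  "sp F = {x. \<exists>r. x = (\<Sum>a\<in>F. a * r a)}"

lemma ri_add:
  assumes "right_ideal_wrt mul I" "x \<in> I" "y \<in> I" shows "x + y \<in> I"
proof -
  have "0 - y \<in> I" using assms unfolding right_ideal_wrt_def by blast
  then have "x - (0 - y) \<in> I" using assms unfolding right_ideal_wrt_def by blast
  then show ?thesis by simp
qed

lemma ri_diff: "right_ideal_wrt mul I \<Longrightarrow> x \<in> I \<Longrightarrow> y \<in> I \<Longrightarrow> x - y \<in> I"
  unfolding right_ideal_wrt_def by blast

lemma ri_mul: "right_ideal_wrt mul I \<Longrightarrow> x \<in> I \<Longrightarrow> mul x s \<in> I"
  unfolding right_ideal_wrt_def by blast

lemma ri_zero: "right_ideal_wrt mul I \<Longrightarrow> 0 \<in> I"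
  unfolding right_ideal_wrt_def by blast

lemma ri_sum:
  assumes "right_ideal_wrt mul I" "finite A" "\<And>a. a \<in> A \<Longrightarrow> g a \<in> I"
  shows "sum g A \<in> I"
  using assms(2,3)
proof (induction A rule: finite_induct)
  case empty then show ?case using ri_zero[OF assms(1)] by simp
next
  case (insert x F) then show ?case using ri_add[OF assms(1)] by simp
qed

lemma sp_ideal: "right_ideal_wrt (*) (sp F)"
  unfolding right_ideal_wrt_def
proof (intro conjI ballI allI)
  show "0 \<in> sp F" unfolding sp_def by (rule CollectI, rule exI[of _ "\<lambda>_. 0"]) simp
next
  fix x y assume "x \<in> sp F" "y \<in> sp F"
  then obtain r r' where "x = (\<Sum>a\<in>F. a * r a)" "y = (\<Sum>a\<in>F. a * r' a)"
    unfolding sp_def by blast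
  then show "x - y \<in> sp F" unfolding sp_def
    by (intro CollectI exI[of _ "\<lambda>a. r a - r' a"]) (simp add: right_diff_distrib sum_subtractf)
next
  fix x s assume "x \<in> sp F"
  then obtain r where "x = (\<Sum>a\<in>F. a * r a)" unfolding sp_def by blast
  then show "x * s \<in> sp F" unfolding sp_def
    by (intro CollectI exI[of _ "\<lambda>a. r a * s"]) (simp add: sum_distrib_right mult.assoc)
qed

lemma sp_mono: assumes "finite F" shows "sp F \<subseteq> sp (insert x F)"
proof
  fix y assume "y \<in> sp F"
  then obtain r where r: "y = (\<Sum>a\<in>F. a * r a)" unfolding sp_def by blast
  show "y \<in> sp (insert x F)"
  proof (cases "x \<in> F")
    case True then show ?thesis using \<open>y \<in> sp F\<close> by (simp add: insert_absorb)
  next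
    case False
    have "(\<Sum>a\<in>insert x F. a * (r(x:=0)) a) = (\<Sum>a\<in>F. a * (r(x:=0)) a)"
      using False assms by simp
    also have "\<dots> = y" unfolding r using False by (intro sum.cong) auto
    finally show ?thesis unfolding sp_def by (intro CollectI exI[of _ "r(x:=0)"]) simp
  qed
qed

lemma sp_in: assumes "finite F" shows "x \<in> sp (insert x F)"
proof -
  have "(\<Sum>a\<in>insert x F. a * (if a = x then 1 else 0)) = (\<Sum>a\<in>insert x F. if a = x then x else 0)"
    by (rule sum.cong) auto
  also have "\<dots> = x" using assms by (simp add: sum.delta')
  finally show ?thesis unfolding sp_def by (intro CollectI exI[of _ "\<lambda>a. if a = x then 1 else 0"]) simp
qed

lemma sp_sub:
  assumes "right_ideal_wrt (*) L" "F \<subseteq> L" "finite F" shows "sp F \<subseteq> L"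
proof
  fix x assume "x \<in> sp F"
  then obtain r where r: "x = (\<Sum>a\<in>F. a * r a)" unfolding sp_def by blast
  show "x \<in> L" unfolding r
    by (rule ri_sum[OF assms(1) assms(3)]) (use assms ri_mul in blast)
qed

lemma fg:
  fixes L :: "'a::ring_1 set"
  assumes noeth: "right_noetherian_wrt ((*) :: 'a \<Rightarrow> 'a \<Rightarrow> 'a)" and L: "right_ideal_wrt (*) L"
  shows "\<exists>A. finite A \<and> A \<subseteq> L \<and> L \<subseteq> sp A"
proof (rule ccontr)
  assume nf: "\<not> ?thesis"
  have step: "\<exists>x. x \<in> L \<and> x \<notin> sp A" if "finite A" "A \<subseteq> L" for A
    using nf that by blast
  define nx where "nx A = (SOME x. x \<in> L \<and> x \<notin> sp A)" for A
  define F where "F = rec_nat {} (\<lambda>_ A. insert (nx A) A)"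
  have F0: "F 0 = {}" and FS: "\<And>n. F (Suc n) = insert (nx (F n)) (F n)" by (simp_all add: F_def)
  have inv: "finite (F n) \<and> F n \<subseteq> L" for n
  proof (induction n)
    case 0 then show ?case by (simp add: F0)
  next
    case (Suc n)
    have "nx (F n) \<in> L \<and> nx (F n) \<notin> sp (F n)" unfolding nx_def
      by (rule someI_ex[OF step[of "F n"]]) (use Suc in auto)
    then have "nx (F n) \<in> L" by simp
    then show ?case using Suc by (simp add: FS)
  qed
  have "\<exists>N. \<forall>n\<ge>N. sp (F n) = sp (F N)"
  proof -
    have "\<forall>n. F n \<subseteq> F (Suc n)" using FS by blast
    have "\<forall>n. sp (F n) \<subseteq> sp (F (Suc n))" using sp_mono inv FS by metis
    moreover have "\<forall>n. right_ideal_wrt (*) (sp (F n))" using sp_ideal by blast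
    ultimately show ?thesis using noeth unfolding right_noetherian_wrt_def
      by (elim allE[of _ "\<lambda>n. sp (F n)"]) simp
  qed
  then obtain N where N0: "\<forall>n\<ge>N. sp (F n) = sp (F N)" by blast
  have N: "sp (F (Suc N)) = sp (F N)" using N0[rule_format, of "Suc N"] by linarith
  have "nx (F N) \<in> L \<and> nx (F N) \<notin> sp (F N)" unfolding nx_def
    by (rule someI_ex[OF step[of "F N"]]) (use inv in auto)
  then have "nx (F N) \<notin> sp (F N)" by simp
  moreover have "nx (F N) \<in> sp (F (Suc N))" unfolding FS using sp_in inv by blast
  ultimately show False using N by blast
qed


lemma pow_add:
  fixes \<sigma> :: "'a::plus \<Rightarrow> 'a"
  assumes add: "\<And>x y. \<sigma> (x + y) = \<sigma> x + \<sigma> y"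
  shows "(\<sigma>^^n) (x + y) = (\<sigma>^^n) x + (\<sigma>^^n) y"
  by (induction n) (simp_all add: add)

lemma pow_zero:
  fixes \<sigma> :: "'a::ring_1 \<Rightarrow> 'a"
  assumes add: "\<And>x y. \<sigma> (x + y) = \<sigma> x + \<sigma> y"
  shows "(\<sigma>^^n) 0 = 0"
proof -
  have "\<sigma> 0 = \<sigma> 0 + \<sigma> 0" using add[of 0 0] by simp
  then have z: "\<sigma> 0 = 0" by simp
  show ?thesis by (induction n) (simp_all add: z)
qed

lemma pow_one:
  fixes \<sigma> :: "'a::one \<Rightarrow> 'a"
  assumes "\<sigma> 1 = 1" shows "(\<sigma>^^n) 1 = 1"
  by (induction n) (simp_all add: assms)

lemma pow_surj:
  fixes \<sigma> :: "'a \<Rightarrow> 'a"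
  assumes "surj \<sigma>" shows "surj (\<sigma>^^n)"
proof (induction n)
  case 0 then show ?case by simp
next
  case (Suc n)
  have "\<sigma>^^Suc n = \<sigma>^^n \<circ> \<sigma>" by (rule funpow_Suc_right)
  then show ?case using comp_surj[OF assms Suc] by simp
qed

lemma mult_nth:
  "skew_fps_mult \<sigma> f g $ k = (\<Sum>m\<le>k. f $ m * (\<sigma> ^^ m) (g $ (k - m)))"
  by (simp add: skew_fps_mult_def)

lemma mult_mon:
  fixes \<sigma> :: "'a::ring_1 \<Rightarrow> 'a"
  assumes zero: "\<And>n. (\<sigma>^^n) 0 = 0"
  shows "skew_fps_mult \<sigma> f (mon c k) $ m = (if k \<le> m then f $ (m - k) * (\<sigma>^^(m - k)) c else 0)"
proof (cases "k \<le> m")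
  case True
  have "skew_fps_mult \<sigma> f (mon c k) $ m = (\<Sum>i\<le>m. if i = m - k then f $ i * (\<sigma>^^i) c else 0)"
    unfolding mult_nth using True by (intro sum.cong) (auto simp: zero)
  also have "\<dots> = f $ (m - k) * (\<sigma>^^(m - k)) c" by (simp add: sum.delta)
  finally show ?thesis using True by simp
next
  case False
  then show ?thesis unfolding mult_nth by (auto simp: zero intro!: sum.neutral)
qed

lemma mult_add2:
  fixes \<sigma> :: "'a::ring_1 \<Rightarrow> 'a"
  assumes add: "\<And>x y. \<sigma> (x + y) = \<sigma> x + \<sigma> y"
  shows "skew_fps_mult \<sigma> f (g + g') = skew_fps_mult \<sigma> f g + skew_fps_mult \<sigma> f g'"
  by (rule fps_ext) (simp add: mult_nth pow_add[OF add] distrib_left sum.distrib)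

lemma mult_zero2:
  fixes \<sigma> :: "'a::ring_1 \<Rightarrow> 'a"
  assumes add: "\<And>x y. \<sigma> (x + y) = \<sigma> x + \<sigma> y"
  shows "skew_fps_mult \<sigma> f 0 = 0"
  by (rule fps_ext) (simp add: mult_nth pow_zero[of \<sigma>, OF add])

lemma mult_cong2:
  fixes \<sigma> :: "'a::ring_1 \<Rightarrow> 'a"
  assumes "\<And>t. t \<le> m \<Longrightarrow> g $ t = g' $ t"
  shows "skew_fps_mult \<sigma> f g $ m = skew_fps_mult \<sigma> f g' $ m"
  unfolding mult_nth using assms by (intro sum.cong) auto

lemma L_ideal:
  fixes \<sigma> :: "'a::ring_1 \<Rightarrow> 'a"
  assumes add: "\<And>x y. \<sigma> (x + y) = \<sigma> x + \<sigma> y" and surj: "surj \<sigma>"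
    and I: "right_ideal_wrt (skew_fps_mult \<sigma>) I"
  shows "right_ideal_wrt (*) (Lc n I)"
  unfolding right_ideal_wrt_def
proof (intro conjI ballI allI)
  show "0 \<in> Lc n I" unfolding Lc_def using ri_zero[OF I] by force
next
  fix x y assume "x \<in> Lc n I" "y \<in> Lc n I"
  then obtain f g where "f \<in> I" "\<forall>i<n. f $ i = 0" "f $ n = x" "g \<in> I" "\<forall>i<n. g $ i = 0" "g $ n = y"
    unfolding Lc_def by blast
  then show "x - y \<in> Lc n I" unfolding Lc_def
    by (intro CollectI bexI[of _ "f - g"]) (auto intro: ri_diff[OF I])
next
  fix x s assume "x \<in> Lc n I"
  then obtain f where f: "f \<in> I" "\<forall>i<n. f $ i = 0" "f $ n = x" unfolding Lc_def by blast
  obtain t where t: "(\<sigma>^^n) t = s" using pow_surj[OF surj, of n] by (metis surjD)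
  have "skew_fps_mult \<sigma> f (mon t 0) \<in> I" by (rule ri_mul[OF I f(1)])
  moreover have "\<forall>i<n. skew_fps_mult \<sigma> f (mon t 0) $ i = 0"
    using f by (simp add: mult_mon[OF pow_zero[of \<sigma>, OF add]])
  moreover have "skew_fps_mult \<sigma> f (mon t 0) $ n = x * s"
    using f t by (simp add: mult_mon[OF pow_zero[of \<sigma>, OF add]])
  ultimately show "x * s \<in> Lc n I" unfolding Lc_def by blast
qed

lemma L_shift:
  fixes \<sigma> :: "'a::ring_1 \<Rightarrow> 'a"
  assumes add: "\<And>x y. \<sigma> (x + y) = \<sigma> x + \<sigma> y" and one: "\<sigma> 1 = 1"
    and I: "right_ideal_wrt (skew_fps_mult \<sigma>) I"
  shows "Lc n I \<subseteq> Lc (n + d) I"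
proof
  fix x assume "x \<in> Lc n I"
  then obtain f where f: "f \<in> I" "\<forall>i<n. f $ i = 0" "f $ n = x" unfolding Lc_def by blast
  have "skew_fps_mult \<sigma> f (mon 1 d) \<in> I" by (rule ri_mul[OF I f(1)])
  moreover have "\<forall>i<n + d. skew_fps_mult \<sigma> f (mon 1 d) $ i = 0"
    using f by (auto simp: mult_mon[OF pow_zero[of \<sigma>, OF add]] pow_one[of \<sigma>, OF one])
  moreover have "skew_fps_mult \<sigma> f (mon 1 d) $ (n + d) = x"
    using f by (simp add: mult_mon[OF pow_zero[of \<sigma>, OF add]] pow_one[of \<sigma>, OF one])
  ultimately show "x \<in> Lc (n + d) I" unfolding Lc_def by blast
qed

lemma L_mono: "I \<subseteq> J \<Longrightarrow> Lc n I \<subseteq> Lc n J"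
  unfolding Lc_def by blast


theorem theorem19:
  fixes \<sigma> :: "'a::ring_1 \<Rightarrow> 'a"
  assumes additive: "\<And>x y. \<sigma> (x + y) = \<sigma> x + \<sigma> y"
    and surj: "surj \<sigma>"
    and one: "\<sigma> 1 = 1"
    and noeth: "right_noetherian_wrt ((*) :: 'a \<Rightarrow> 'a \<Rightarrow> 'a)"
  shows "right_noetherian_wrt (skew_fps_mult \<sigma>)"
  unfolding right_noetherian_wrt_def
proof (intro allI impI)
  let ?m = "skew_fps_mult \<sigma>"
  have zero: "\<And>n. (\<sigma>^^n) 0 = 0" by (rule pow_zero[of \<sigma>, OF additive])
  note mm = mult_mon[of \<sigma>, OF zero]
  note madd = mult_add2[of \<sigma>, OF additive]
  note mz = mult_zero2[of \<sigma>, OF additive]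
  have psurj: "\<And>n. surj (\<sigma>^^n)" by (rule pow_surj[OF surj])
  fix I :: "nat \<Rightarrow> 'a fps set"
  assume "(\<forall>n. right_ideal_wrt ?m (I n)) \<and> (\<forall>n. I n \<subseteq> I (Suc n))"
  then have Iid: "\<And>n. right_ideal_wrt ?m (I n)" and Iinc: "\<And>n. I n \<subseteq> I (Suc n)" by auto
  have Imono: "\<And>j j'. j \<le> j' \<Longrightarrow> I j \<subseteq> I j'"
    using lift_Suc_mono_le[of I, OF Iinc] by blast
  have Lid: "\<And>n j. right_ideal_wrt (*) (Lc n (I j))"
    by (rule L_ideal[OF additive surj Iid])
  have Lmono2: "Lc n (I j) \<subseteq> Lc n' (I j')" if "n \<le> n'" "j \<le> j'" for n n' j j'
  proof -
    have "Lc n (I j) \<subseteq> Lc n (I j')" by (rule L_mono[OF Imono[OF that(2)]])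
    also have "\<dots> \<subseteq> Lc (n + (n' - n)) (I j')" by (rule L_shift[OF additive one Iid])
    finally show ?thesis using that by simp
  qed
  have "\<exists>N. \<forall>n\<ge>N. Lc n (I n) = Lc N (I N)"
  proof -
    have "\<forall>n. Lc n (I n) \<subseteq> Lc (Suc n) (I (Suc n))" using Lmono2 by simp
    moreover have "\<forall>n. right_ideal_wrt (*) (Lc n (I n))" using Lid by blast
    ultimately show ?thesis using noeth unfolding right_noetherian_wrt_def
      by (elim allE[of _ "\<lambda>n. Lc n (I n)"]) simp
  qed
  then obtain N where N: "\<forall>n\<ge>N. Lc n (I n) = Lc N (I N)" by blast
  define L where "L = Lc N (I N)"
  have claim1: "Lc n (I j) = L" if "N \<le> n" "N \<le> j" for n j
  proof
    have "Lc n (I j) \<subseteq> Lc (max n j) (I (max n j))" by (rule Lmono2) auto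
    also have "\<dots> = L" unfolding L_def using N that by (metis le_max_iff_disj)
    finally show "Lc n (I j) \<subseteq> L" .
    show "L \<subseteq> Lc n (I j)" unfolding L_def using that by (rule Lmono2)
  qed
  have "\<forall>n. \<exists>M. \<forall>j\<ge>M. Lc n (I j) = Lc n (I M)"
  proof
    fix n
    have "\<forall>j. Lc n (I j) \<subseteq> Lc n (I (Suc j))" using Lmono2 by simp
    moreover have "\<forall>j. right_ideal_wrt (*) (Lc n (I j))" using Lid by blast
    ultimately show "\<exists>M. \<forall>j\<ge>M. Lc n (I j) = Lc n (I M)" using noeth unfolding right_noetherian_wrt_def
      by (elim allE[of _ "\<lambda>j. Lc n (I j)"]) simp
  qed
  then obtain Mn where Mn: "\<And>n j. j \<ge> Mn n \<Longrightarrow> Lc n (I j) = Lc n (I (Mn n))" by metis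
  define M where "M = N + (\<Sum>n<N. Mn n)"
  have MN: "N \<le> M" unfolding M_def by simp
  have MMn: "Mn n \<le> M" if "n < N" for n
  proof -
    have "Mn n \<le> (\<Sum>n<N. Mn n)" by (rule member_le_sum) (use that in auto)
    then show ?thesis unfolding M_def by simp
  qed
  have claim2: "Lc n (I j) = Lc n (I M)" if "M \<le> j" for n j
  proof (cases "N \<le> n")
    case True then show ?thesis using claim1 MN that by simp
  next
    case False
    then have "Mn n \<le> M" using MMn by simp
    then show ?thesis using Mn that by (metis order_trans order_refl)
  qed
  show "\<exists>N. \<forall>n\<ge>N. I n = I N"
  proof (intro exI allI impI)
    fix j assume j: "M \<le> j"
    have IMj: "I M \<subseteq> I j" by (rule Imono[OF j])
    have Lj: "\<And>n. n \<ge> N \<Longrightarrow> Lc n (I j) = L" using claim1 j MN by simp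
    have LI: "right_ideal_wrt (*) L" unfolding L_def by (rule Lid)
    obtain A where A: "finite A" "A \<subseteq> L" "L \<subseteq> sp A"
      using fg[OF noeth LI] by blast
    have "\<forall>a\<in>A. \<exists>g. g \<in> I M \<and> (\<forall>i<N. g $ i = 0) \<and> g $ N = a"
      using A(2) claim1[OF order_refl MN] unfolding Lc_def by blast
    then obtain h where h: "\<And>a. a \<in> A \<Longrightarrow> h a \<in> I M \<and> (\<forall>i<N. h a $ i = 0) \<and> h a $ N = a"
      by metis
    have hI: "\<And>a q. a \<in> A \<Longrightarrow> ?m (h a) q \<in> I M" using h ri_mul[OF Iid] by blast
    have sumI: "(\<Sum>a\<in>A. ?m (h a) (q a)) \<in> I M" for q
      by (rule ri_sum[OF Iid A(1)]) (rule hI)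
    have claim3: "f \<in> I M" if f: "f \<in> I j" and fo: "\<forall>i<N. f $ i = 0" for f
    proof -
      define C where "C k g = (SOME c. g $ (N + k) = (\<Sum>a\<in>A. a * (\<sigma>^^N) (c a)))"
        for k and g :: "'a fps"
      define r where "r = rec_nat f (\<lambda>k g. g - (\<Sum>a\<in>A. ?m (h a) (mon (C k g a) k)))"
      have r0: "r 0 = f" and rS: "\<And>k. r (Suc k) = r k - (\<Sum>a\<in>A. ?m (h a) (mon (C k (r k) a) k))"
        by (simp_all add: r_def)
      have inv: "r k \<in> I j \<and> (\<forall>i<N + k. r k $ i = 0)" for k
      proof (induction k)
        case 0 then show ?case using r0 f fo by simp
      next
        case (Suc k)
        then have rk: "r k \<in> I j" and rko: "\<forall>i<N + k. r k $ i = 0" by auto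
        have "r k $ (N + k) \<in> Lc (N + k) (I j)" unfolding Lc_def using rk rko by blast
        then have "r k $ (N + k) \<in> sp A" using Lj A(3) by auto
        then obtain rr where rr: "r k $ (N + k) = (\<Sum>a\<in>A. a * rr a)" unfolding sp_def by blast
        have "(\<sigma>^^N) (inv (\<sigma>^^N) (rr a)) = rr a" for a by (rule surj_f_inv_f[OF psurj])
        then have ex: "\<exists>c. r k $ (N + k) = (\<Sum>a\<in>A. a * (\<sigma>^^N) (c a))"
          using rr by (intro exI[of _ "\<lambda>a. inv (\<sigma>^^N) (rr a)"]) simp
        have CC: "r k $ (N + k) = (\<Sum>a\<in>A. a * (\<sigma>^^N) (C k (r k) a))"
          unfolding C_def by (rule someI_ex[OF ex])
        have mem: "r (Suc k) \<in> I j" unfolding rS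
          by (rule ri_diff[OF Iid rk subsetD[OF IMj sumI]])
        have "r (Suc k) $ i = 0" if i: "i < N + Suc k" for i
        proof -
          have eq: "r (Suc k) $ i = r k $ i - (\<Sum>a\<in>A. if k \<le> i then h a $ (i - k) * (\<sigma>^^(i - k)) (C k (r k) a) else 0)"
            by (simp add: rS fps_sum_nth mm)
          show ?thesis
          proof (cases "i < N + k")
            case True
            have "(\<Sum>a\<in>A. if k \<le> i then h a $ (i - k) * (\<sigma>^^(i - k)) (C k (r k) a) else 0) = 0"
              using True h by (intro sum.neutral) auto
            then show ?thesis using eq rko True by simp
          next
            case False
            then have iN: "i = N + k" using i by simp
            have "(\<Sum>a\<in>A. if k \<le> i then h a $ (i - k) * (\<sigma>^^(i - k)) (C k (r k) a) else 0)
                = (\<Sum>a\<in>A. a * (\<sigma>^^N) (C k (r k) a))"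
              using iN h by (intro sum.cong) auto
            then show ?thesis using eq CC iN by simp
          qed
        qed
        then show ?case using mem by simp
      qed
      define q where "q a = Abs_fps (\<lambda>k. C k (r k) a)" for a
      have E: "f - r K = (\<Sum>a\<in>A. ?m (h a) (\<Sum>k<K. mon (C k (r k) a) k))" for K
      proof (induction K)
        case 0 then show ?case by (simp add: r0 mz)
      next
        case (Suc K)
        have "f - r (Suc K) = (f - r K) + (\<Sum>a\<in>A. ?m (h a) (mon (C K (r K) a) K))"
          by (simp add: rS)
        also have "\<dots> = (\<Sum>a\<in>A. ?m (h a) (\<Sum>k<K. mon (C k (r k) a) k) + ?m (h a) (mon (C K (r K) a) K))"
          by (simp add: Suc sum.distrib)
        also have "\<dots> = (\<Sum>a\<in>A. ?m (h a) (\<Sum>k<Suc K. mon (C k (r k) a) k))"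
          by (simp add: madd)
        finally show ?case .
      qed
      have "f = (\<Sum>a\<in>A. ?m (h a) (q a))"
      proof (rule fps_ext)
        fix m
        have "r (Suc m) $ m = 0" using inv[of "Suc m"] by simp
        then have "f $ m = (f - r (Suc m)) $ m" by simp
        also have "\<dots> = (\<Sum>a\<in>A. ?m (h a) (\<Sum>k<Suc m. mon (C k (r k) a) k) $ m)"
          by (simp add: E fps_sum_nth)
        also have "\<dots> = (\<Sum>a\<in>A. ?m (h a) (q a) $ m)"
        proof (rule sum.cong[OF refl], rule mult_cong2)
          fix a t assume "t \<le> m"
          then show "(\<Sum>k<Suc m. mon (C k (r k) a) k) $ t = q a $ t"
            by (simp add: fps_sum_nth q_def sum.delta')
        qed
        finally show "f $ m = (\<Sum>a\<in>A. ?m (h a) (q a)) $ m" by (simp add: fps_sum_nth)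
      qed
      then show ?thesis using sumI by metis
    qed
    have claim4: "f \<in> I M" if "d \<le> N" "f \<in> I j" "\<forall>i<N - d. f $ i = 0" for d f
      using that
    proof (induction d arbitrary: f)
      case 0 then show ?case using claim3 by simp
    next
      case (Suc d)
      define n where "n = N - Suc d"
      have nN: "n < N" and n1: "Suc n = N - d" using Suc.prems(1) unfolding n_def by auto
      have "f $ n \<in> Lc n (I j)" unfolding Lc_def using Suc.prems n_def by blast
      then have "f $ n \<in> Lc n (I M)" using claim2[OF j] by simp
      then obtain g where g: "g \<in> I M" "\<forall>i<n. g $ i = 0" "g $ n = f $ n" unfolding Lc_def by blast
      have "f - g \<in> I j" using ri_diff[OF Iid Suc.prems(2)] g(1) IMj by blast
      moreover have "\<forall>i<N - d. (f - g) $ i = 0"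
      proof (intro allI impI)
        fix i assume "i < N - d"
        then have "i < n \<or> i = n" using n1 by auto
        then show "(f - g) $ i = 0" using g Suc.prems(3) n_def by auto
      qed
      ultimately have "f - g \<in> I M" using Suc.IH Suc.prems(1) by simp
      then have "(f - g) + g \<in> I M" using ri_add[OF Iid] g(1) by blast
      then show ?case by simp
    qed
    show "I j = I M"
    proof
      show "I j \<subseteq> I M" using claim4[of N] by auto
      show "I M \<subseteq> I j" by (rule IMj)
    qed
  qed
qed

end
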